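(* For all $0 < t < \infty$, $$\frac{6 - 10^{-20}}{t^2} > 3Q(t)^2.$$
   Context: $Q(t)$, $t\ge 0$, denotes the radial profile of the positive radial ground state of $\Delta\phi - \phi + |\phi|^2\phi = 0$ on $\mathbb{R}^3$; it solves $-Q'' - \frac{2}{t}Q' + Q - Q^3 = 0$. *)

theory Defs
  imports "HOL-Analysis.Analysis"
begin

text \<open>Radial profile of the positive radial ground state of
  Delta phi - phi + |phi|^2 phi = 0 on R^3: a positive solution of
  -Q'' - (2/t) Q' + Q - Q^3 = 0 on (0,oo), regular at the origin (Q'(0)=0),
  decaying to 0 at infinity. By the uniqueness theorem of Coffman/Kwong
  this characterizes Q uniquely.\<close>

definition ground_state_profile :: "(real \<Rightarrow> real) \<Rightarrow> bool" where
  "ground_state_profile Q \<longleftrightarrow>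
     (\<exists>Q' Q''.
        (\<forall>t\<ge>0. (Q has_real_derivative Q' t) (at t within {0..})) \<and>
        Q' 0 = 0 \<and>
        (\<forall>t>0. (Q' has_real_derivative Q'' t) (at t)) \<and>
        (\<forall>t>0. - Q'' t - (2 / t) * Q' t + Q t - (Q t)^3 = 0)) \<and>
     (\<forall>t\<ge>0. Q t > 0) \<and>
     (Q \<longlongrightarrow> 0) at_top"

end

theory Submission
  imports Defs
begin



definition cI :: "nat \<Rightarrow> int" where "cI i = (1000000 * (3 * int i ^ 2 + 3 * int i + 1)) div 24000"
definition eI :: "nat \<Rightarrow> int" where "eI i = (20000000) div (int i * (int i + 1))"
definition fI :: "nat \<Rightarrow> int" where "fI i = (1000000 * (3 * int i + 1)) div (2400 * (int i + 1))"
definition gmI :: "int \<Rightarrow> int" where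
  "gmI a = (let b = max 1000000 a in (1999 * ((b ^ 3 div 1000000) div 1000000)) div 1000 - b)"

primrec Dfrom :: "int list \<Rightarrow> nat \<Rightarrow> nat \<Rightarrow> int \<Rightarrow> int list" where
  "Dfrom A i 0 d = [d]"
| "Dfrom A i (Suc n) d = d # Dfrom A (Suc i) n (d + (gmI (A ! Suc i) * cI i) div 1000000)"

definition Dl :: "int list \<Rightarrow> int list" where "Dl A = 0 # Dfrom A 1 19 0"

fun bld :: "int list \<Rightarrow> int list \<Rightarrow> nat \<Rightarrow> int list \<Rightarrow> int list" where
  "bld A D 0 acc = acc"
| "bld A D (Suc k) acc = bld A D k ((hd acc + (max 0 (D ! Suc k) * eI (Suc k)) div 1000000 + (gmI (A ! Suc (Suc k)) * fI (Suc k)) div 1000000) # acc)"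

definition step :: "int list \<Rightarrow> int list" where "step A = 1000000 # bld A (Dl A) 19 [1000000]"

primrec itr :: "nat \<Rightarrow> int list" where
  "itr 0 = replicate 21 1000000"
| "itr (Suc k) = step (itr k)"

definition sg :: "nat \<Rightarrow> real" where "sg i = real i / 20"

lemma div_le_real: "0 < l \<Longrightarrow> real_of_int (k div l) \<le> real_of_int k / real_of_int l"
  by (metis floor_divide_of_int_eq of_int_floor_le)

lemma cI_ok: "real_of_int (cI i) / 1000000 \<le> (sg (Suc i) ^ 3 - sg i ^ 3) / 3" "0 \<le> cI i"
proof -
  have "real_of_int (cI i) \<le> real_of_int (1000000 * (3 * int i ^ 2 + 3 * int i + 1)) / 24000"
    unfolding cI_def using div_le_real[of 24000 "1000000 * (3 * int i ^ 2 + 3 * int i + 1)"] by simp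
  moreover have "(sg (Suc i) ^ 3 - sg i ^ 3) / 3 = (3 * real i ^ 2 + 3 * real i + 1) / 24000"
    unfolding sg_def by (simp add: field_simps power3_eq_cube power2_eq_square)
  ultimately show "real_of_int (cI i) / 1000000 \<le> (sg (Suc i) ^ 3 - sg i ^ 3) / 3" by simp
  show "0 \<le> cI i" unfolding cI_def by (simp add: pos_imp_zdiv_nonneg_iff)
qed

lemma eI_ok: "1 \<le> i \<Longrightarrow> real_of_int (eI i) / 1000000 \<le> 1 / sg i - 1 / sg (Suc i)" "0 \<le> eI i"
proof -
  assume i: "1 \<le> i"
  have "real_of_int (eI i) \<le> real_of_int 20000000 / real_of_int (int i * (int i + 1))"
    unfolding eI_def by (rule div_le_real) (use i in simp)
  moreover have "1 / sg i - 1 / sg (Suc i) = 20 / (real i * (real i + 1))"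
    unfolding sg_def using i by (simp add: field_simps)
  ultimately show "real_of_int (eI i) / 1000000 \<le> 1 / sg i - 1 / sg (Suc i)" by simp
next
  show "0 \<le> eI i" unfolding eI_def by (simp add: div_int_pos_iff)
qed

lemma fI_id: "(t::real) \<ge> 1 \<Longrightarrow> ((((t+1)/20)^2 - (t/20)^2)/2 + (t/20)^3*(1/((t+1)/20) - 1/(t/20))) / 3 = (3*t+1)/(2400*(t+1))"
proof -
  assume t: "t \<ge> 1"
  have p: "0 < t*8000" "0 < t*(t*8000)" using t by auto
  have a3: "t * 8000 + t * (t * 8000) \<noteq> 0" using p by linarith
  have a: "t \<noteq> 0" "t + 1 \<noteq> 0" "t * 8000 + t * (t * 8000) \<noteq> 0" using t a3 by auto
  show ?thesis using a by (simp add: field_simps power2_eq_square power3_eq_cube)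
qed

lemma fI_ok: "1 \<le> i \<Longrightarrow> real_of_int (fI i) / 1000000 \<le> ((sg (Suc i) ^ 2 - sg i ^ 2) / 2 + sg i ^ 3 * (1 / sg (Suc i) - 1 / sg i)) / 3" "0 \<le> fI i"
proof -
  assume i: "1 \<le> i"
  have "real_of_int (fI i) / 1000000 \<le> (3 * real i + 1) / (2400 * (real i + 1))"
  proof -
    have e1: "real_of_int (1000000 * (3 * int i + 1)) = 1000000 * (3 * real i + 1)" by simp
    have e2: "real_of_int (2400 * (int i + 1)) = 2400 * (real i + 1)" by simp
    have "real_of_int ((1000000 * (3 * int i + 1)) div (2400 * (int i + 1))) \<le> 1000000 * (3 * real i + 1) / (2400 * (real i + 1))"
      using div_le_real[of "2400 * (int i + 1)" "1000000 * (3 * int i + 1)"] unfolding e1 e2 by simp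
    then show ?thesis unfolding fI_def by (simp add: field_simps)
  qed
  moreover have "((sg (Suc i) ^ 2 - sg i ^ 2) / 2 + sg i ^ 3 * (1 / sg (Suc i) - 1 / sg i)) / 3 = (3 * real i + 1) / (2400 * (real i + 1))"
  proof -
    have e: "sg (Suc i) = (real i + 1) / 20" "sg i = real i / 20" unfolding sg_def by auto
    show ?thesis unfolding e by (rule fI_id) (use i in simp)
  qed
  ultimately show "real_of_int (fI i) / 1000000 \<le> ((sg (Suc i) ^ 2 - sg i ^ 2) / 2 + sg i ^ 3 * (1 / sg (Suc i) - 1 / sg i)) / 3" by (simp only:)
next
  show "0 \<le> fI i" unfolding fI_def by (simp add: div_int_pos_iff)
qed

lemma gmI_ok: "real_of_int (gmI a) / 1000000 \<le> 1999/1000 * (real_of_int (max 1000000 a) / 1000000) ^ 3 - real_of_int (max 1000000 a) / 1000000"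
proof -
  define b where "b = max 1000000 a"
  have b0: "0 \<le> b" unfolding b_def by simp
  have 1: "real_of_int (b ^ 3 div 1000000) \<le> real_of_int (b^3) / 1000000"
    using div_le_real[of 1000000 "b^3"] by simp
  have 2: "real_of_int ((b ^ 3 div 1000000) div 1000000) \<le> real_of_int (b ^ 3 div 1000000) / 1000000"
    using div_le_real[of 1000000 "b^3 div 1000000"] by simp
  have 3: "real_of_int ((1999 * ((b ^ 3 div 1000000) div 1000000)) div 1000) \<le> 1999 * real_of_int ((b ^ 3 div 1000000) div 1000000) / 1000"
    using div_le_real[of 1000 "1999 * ((b ^ 3 div 1000000) div 1000000)"] by simp
  have "real_of_int (gmI a) = real_of_int ((1999 * ((b ^ 3 div 1000000) div 1000000)) div 1000) - real_of_int b"
    unfolding gmI_def b_def Let_def by simp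
  also have "\<dots> \<le> 1999 * (real_of_int (b^3) / 1000000 / 1000000) / 1000 - real_of_int b"
    using 1 2 3 by linarith
  finally show ?thesis unfolding b_def[symmetric]
    by (simp add: field_simps power3_eq_cube)
qed

lemma cubic_mono: "1 \<le> (A::real) \<Longrightarrow> A \<le> y \<Longrightarrow> 1999/1000*A^3 - A \<le> 1999/1000*y^3 - y"
proof -
  assume a: "1 \<le> A" "A \<le> y"
  have gen: "\<And>c::real. c*y^3 - y - (c*A^3 - A) = (y - A) * (c*(y^2 + y*A + A^2) - 1)"
    by (simp add: algebra_simps power2_eq_square power3_eq_cube)
  have "1999/1000*y^3 - y - (1999/1000*A^3 - A) = (y - A) * (1999/1000*(y^2 + y*A + A^2) - 1)"
    by (rule gen)
  have "0 \<le> 1999/1000*(y^2 + y*A + A^2) - 1"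
  proof -
    have "1 \<le> y^2" using a by (simp add: one_le_power)
    moreover have "0 \<le> y*A" using a by simp
    moreover have "0 \<le> A^2" by simp
    ultimately have X: "1 \<le> y^2 + y*A + A^2" by linarith
    then have "1999/1000 \<le> 1999/1000*(y^2 + y*A + A^2)" by simp
    then show ?thesis by linarith
  qed
  then have "0 \<le> (y - A) * (1999/1000*(y^2 + y*A + A^2) - 1)"
    using a by (intro mult_nonneg_nonneg) auto
  with gen[of "1999/1000"] show ?thesis by linarith
qed

locale scaled =
  fixes Y P :: "real \<Rightarrow> real" and u2 x :: real
  assumes dY: "\<And>s. 0 < s \<Longrightarrow> s \<le> 1 \<Longrightarrow> (Y has_real_derivative (- P s / s^2)) (at s)"
    and dP: "\<And>s. 0 < s \<Longrightarrow> s \<le> 1 \<Longrightarrow> (P has_real_derivative (s^2 * (u2 * Y s ^ 3 - x * Y s))) (at s)"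
    and mono: "\<And>a b. 0 < a \<Longrightarrow> a \<le> b \<Longrightarrow> b \<le> 1 \<Longrightarrow> Y b \<le> Y a"
    and Y1: "Y 1 = 1"
    and Pnn: "\<And>s. 0 < s \<Longrightarrow> s \<le> 1 \<Longrightarrow> 0 \<le> P s"
    and P1: "P 1 \<le> 1"
    and u2: "1999/1000 \<le> u2"
    and x0: "0 \<le> x" and x1: "x \<le> 1"
begin

lemma Yge1: "0 < s \<Longrightarrow> s \<le> 1 \<Longrightarrow> 1 \<le> Y s"
  using mono[of s 1] Y1 by simp

lemma Gbound:
  assumes "0 < s" "s \<le> 1" "1 \<le> A" "A \<le> Y s"
  shows "1999/1000*A^3 - A \<le> u2 * Y s ^ 3 - x * Y s"
proof -
  have y1: "1 \<le> Y s" using assms by simp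
  have "1999/1000*A^3 - A \<le> 1999/1000*(Y s)^3 - Y s" by (rule cubic_mono) (use assms in auto)
  moreover have "1999/1000*(Y s)^3 \<le> u2 * Y s ^ 3" using u2 y1 by (simp add: mult_right_mono)
  moreover have "x * Y s \<le> Y s" using x1 y1 by (simp add: mult_left_le_one_le)
  ultimately show ?thesis by linarith
qed

lemma intv1:
  assumes a: "0 < a" "a \<le> s" "s \<le> b" "b \<le> 1" and D: "D \<le> P a" and A: "A \<le> Y b" "1 \<le> A"
  shows "D + (1999/1000*A^3 - A) * (s^3 - a^3) / 3 \<le> P s"
proof -
  define g where "g = 1999/1000*A^3 - A"
  have "(\<lambda>r. P r - g * r^3 / 3) a \<le> (\<lambda>r. P r - g * r^3 / 3) s"
  proof (rule DERIV_nonneg_imp_nondecreasing[OF a(2)])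
    fix r assume r: "a \<le> r" "r \<le> s"
    have r0: "0 < r" "r \<le> 1" using r a by auto
    have "A \<le> Y r" using A(1) mono[of r b] r0 r a by auto
    then have G: "g \<le> u2 * Y r ^ 3 - x * Y r" unfolding g_def using Gbound[of r A] r0 A by auto
    have "((\<lambda>r. P r - g * r^3 / 3) has_real_derivative (r^2 * (u2 * Y r ^ 3 - x * Y r) - g * r^2)) (at r)"
      by (rule derivative_eq_intros dP[OF r0] | simp)+
    moreover have "0 \<le> r^2 * (u2 * Y r ^ 3 - x * Y r) - g * r^2"
    proof -
      have "0 \<le> r^2 * ((u2 * Y r ^ 3 - x * Y r) - g)" using G by simp
      then show ?thesis by (simp add: algebra_simps)
    qed
    ultimately show "\<exists>y. ((\<lambda>r. P r - g * r^3 / 3) has_real_derivative y) (at r) \<and> 0 \<le> y" by blast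
  qed
  then show ?thesis using D unfolding g_def by (simp add: field_simps)
qed


lemma intv2:
  assumes a: "0 < a" "a < b" "b \<le> 1" and D: "D \<le> P a" and A: "A \<le> Y b" "1 \<le> A"
  shows "Y b + D*(1/a - 1/b) + (1999/1000*A^3 - A)/3 * ((b^2-a^2)/2 + a^3*(1/b - 1/a)) \<le> Y a"
proof -
  define g where "g = 1999/1000*A^3 - A"
  define K where "K r = -D/r + g/3*(r^2/2 + a^3/r)" for r
  have "(\<lambda>r. Y r + K r) b \<le> (\<lambda>r. Y r + K r) a"
  proof (rule DERIV_nonpos_imp_nonincreasing[of a b])
    show "a \<le> b" using a by simp
    fix r assume r: "a \<le> r" "r \<le> b"
    have r0: "0 < r" "r \<le> 1" using r a by auto
    have Pr: "D + g*(r^3 - a^3)/3 \<le> P r" using intv1[OF a(1) r(1) r(2) a(3) D A] unfolding g_def .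
    have dK: "(K has_real_derivative (D / r^2 + g/3*(r - a^3/r^2))) (at r)"
      unfolding K_def using r0
      by (auto intro!: derivative_eq_intros simp: field_simps power2_eq_square)
    have "((\<lambda>r. Y r + K r) has_real_derivative (- P r / r^2 + (D / r^2 + g/3*(r - a^3/r^2)))) (at r)"
      by (rule DERIV_add[OF dY[OF r0] dK])
    moreover have "- P r / r^2 + (D / r^2 + g/3*(r - a^3/r^2)) \<le> 0"
    proof -
      have r2: "r^2 \<noteq> 0" using r0 by simp
      have "g/3*(r - a^3/r^2) = (g*(r^3 - a^3)/3) / r^2"
        using r2 by (simp add: field_simps power2_eq_square power3_eq_cube)
      then have "- P r / r^2 + (D / r^2 + g/3*(r - a^3/r^2)) = (D + g*(r^3 - a^3)/3 - P r) / r^2"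
        by (simp add: diff_divide_distrib add_divide_distrib)
      also have "\<dots> \<le> 0" using Pr r0 by (intro divide_nonpos_pos) auto
      finally show ?thesis .
    qed
    ultimately show "\<exists>y. ((\<lambda>r. Y r + K r) has_real_derivative y) (at r) \<and> y \<le> 0" by blast
  qed
  then have "Y b + K b \<le> Y a + K a" by simp
  moreover have "K b - K a = D*(1/a - 1/b) + g/3 * ((b^2-a^2)/2 + a^3*(1/b - 1/a))"
    unfolding K_def by (simp add: algebra_simps diff_divide_distrib)
  ultimately show ?thesis unfolding g_def by linarith
qed

lemma Ar_facts:
  assumes "0 < b" "b \<le> 1" "real_of_int A / 1000000 \<le> Y b"
  shows "1 \<le> real_of_int (max 1000000 A) / 1000000" "real_of_int (max 1000000 A) / 1000000 \<le> Y b"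
    "0 \<le> 1999/1000 * (real_of_int (max 1000000 A) / 1000000)^3 - real_of_int (max 1000000 A) / 1000000"
proof -
  define Ar where "Ar = real_of_int (max 1000000 A) / 1000000"
  have e: "Ar = max 1 (real_of_int A / 1000000)" unfolding Ar_def by (simp add: max_def)
  show 1: "1 \<le> real_of_int (max 1000000 A) / 1000000" using e Ar_def by simp
  show "real_of_int (max 1000000 A) / 1000000 \<le> Y b" using e Ar_def Yge1[OF assms(1,2)] assms(3) by simp
  have "1 \<le> Ar^2" using 1 unfolding Ar_def[symmetric] by (simp add: one_le_power)
  then have "Ar * 1 \<le> Ar * Ar^2" using 1 unfolding Ar_def[symmetric] by (intro mult_left_mono) auto
  then have "Ar \<le> Ar^3" by (simp add: power3_eq_cube power2_eq_square)
  moreover have "0 \<le> Ar^3" using 1 unfolding Ar_def[symmetric] by simp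
  ultimately show "0 \<le> 1999/1000 * (real_of_int (max 1000000 A) / 1000000)^3 - real_of_int (max 1000000 A) / 1000000"
    unfolding Ar_def[symmetric] by linarith
qed

lemma sg_facts: "1 \<le> i \<Longrightarrow> i < 20 \<Longrightarrow> 0 < sg i \<and> sg i < sg (Suc i) \<and> sg (Suc i) \<le> 1"
  by (auto simp: sg_def)

lemma Dstep:
  assumes i: "1 \<le> i" "i < 20" and d: "real_of_int d / 1000000 \<le> P (sg i)"
    and A: "real_of_int A / 1000000 \<le> Y (sg (Suc i))"
  shows "real_of_int (d + (gmI A * cI i) div 1000000) / 1000000 \<le> P (sg (Suc i))"
proof -
  have s: "0 < sg i" "sg i < sg (Suc i)" "sg (Suc i) \<le> 1" using sg_facts[OF i] by auto
  define Ar where "Ar = real_of_int (max 1000000 A) / 1000000"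
  define g where "g = 1999/1000*Ar^3 - Ar"
  have Ar: "1 \<le> Ar" "Ar \<le> Y (sg (Suc i))" "0 \<le> g"
    using Ar_facts[of "sg (Suc i)" A] s A unfolding Ar_def g_def by auto
  have gm: "real_of_int (gmI A) / 1000000 \<le> g" using gmI_ok[of A] unfolding g_def Ar_def .
  have c: "real_of_int (cI i) / 1000000 \<le> (sg (Suc i)^3 - sg i^3)/3" "0 \<le> real_of_int (cI i)" using cI_ok[of i] by auto
  have "real_of_int ((gmI A * cI i) div 1000000) \<le> real_of_int (gmI A * cI i) / 1000000"
    using div_le_real[of 1000000 "gmI A * cI i"] by simp
  also have "\<dots> = (real_of_int (gmI A) / 1000000) * (real_of_int (cI i) / 1000000) * 1000000" by simp
  also have "\<dots> \<le> g * (real_of_int (cI i) / 1000000) * 1000000"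
    using gm c(2) by (intro mult_right_mono) auto
  also have "\<dots> \<le> g * ((sg (Suc i)^3 - sg i^3)/3) * 1000000"
    using c(1) Ar(3) by (intro mult_right_mono mult_left_mono) auto
  finally have X: "real_of_int ((gmI A * cI i) div 1000000) / 1000000 \<le> g * ((sg (Suc i)^3 - sg i^3)/3)" by simp
  have "real_of_int d / 1000000 + g * (sg (Suc i)^3 - sg i^3) / 3 \<le> P (sg (Suc i))"
    using intv1[of "sg i" "sg (Suc i)" "sg (Suc i)" "real_of_int d / 1000000" Ar] s d Ar unfolding g_def by auto
  then show ?thesis using X by simp
qed

lemma Astep:
  assumes i: "1 \<le> i" "i < 20" and d: "real_of_int d / 1000000 \<le> P (sg i)"
    and A: "real_of_int A / 1000000 \<le> Y (sg (Suc i))" and h: "real_of_int h / 1000000 \<le> Y (sg (Suc i))"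
  shows "real_of_int (h + (max 0 d * eI i) div 1000000 + (gmI A * fI i) div 1000000) / 1000000 \<le> Y (sg i)"
proof -
  have s: "0 < sg i" "sg i < sg (Suc i)" "sg (Suc i) \<le> 1" using sg_facts[OF i] by auto
  define Ar where "Ar = real_of_int (max 1000000 A) / 1000000"
  define g where "g = 1999/1000*Ar^3 - Ar"
  have Ar: "1 \<le> Ar" "Ar \<le> Y (sg (Suc i))" "0 \<le> g"
    using Ar_facts[of "sg (Suc i)" A] s A unfolding Ar_def g_def by auto
  have gm: "real_of_int (gmI A) / 1000000 \<le> g" using gmI_ok[of A] unfolding g_def Ar_def .
  define D where "D = real_of_int (max 0 d) / 1000000"
  have D: "0 \<le> D" "D \<le> P (sg i)" using d Pnn[of "sg i"] s unfolding D_def by (auto simp: max_def)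
  define F where "F = ((sg (Suc i) ^ 2 - sg i ^ 2) / 2 + sg i ^ 3 * (1 / sg (Suc i) - 1 / sg i)) / 3"
  have f: "real_of_int (fI i) / 1000000 \<le> F" "0 \<le> real_of_int (fI i)" using fI_ok[of i] i unfolding F_def by auto
  have e: "real_of_int (eI i) / 1000000 \<le> 1 / sg i - 1 / sg (Suc i)" "0 \<le> real_of_int (eI i)" using eI_ok[of i] i by auto
  have "real_of_int ((gmI A * fI i) div 1000000) \<le> real_of_int (gmI A * fI i) / 1000000"
    using div_le_real[of 1000000 "gmI A * fI i"] by simp
  also have "\<dots> = (real_of_int (gmI A) / 1000000) * (real_of_int (fI i) / 1000000) * 1000000" by simp
  also have "\<dots> \<le> g * (real_of_int (fI i) / 1000000) * 1000000"
    using gm f(2) by (intro mult_right_mono) auto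
  also have "\<dots> \<le> g * F * 1000000"
    using f(1) Ar(3) by (intro mult_right_mono mult_left_mono) auto
  finally have X: "real_of_int ((gmI A * fI i) div 1000000) / 1000000 \<le> g * F" by simp
  have "real_of_int ((max 0 d * eI i) div 1000000) \<le> real_of_int (max 0 d * eI i) / 1000000"
    using div_le_real[of 1000000 "max 0 d * eI i"] by simp
  also have "\<dots> = D * (real_of_int (eI i) / 1000000) * 1000000" unfolding D_def by simp
  also have "\<dots> \<le> D * (1 / sg i - 1 / sg (Suc i)) * 1000000"
    using e(1) D(1) by (intro mult_right_mono mult_left_mono) auto
  finally have Z: "real_of_int ((max 0 d * eI i) div 1000000) / 1000000 \<le> D * (1 / sg i - 1 / sg (Suc i))" by simp
  have "Y (sg (Suc i)) + D*(1/sg i - 1/sg (Suc i)) + g/3 * ((sg (Suc i)^2-sg i^2)/2 + sg i^3*(1/sg (Suc i) - 1/sg i)) \<le> Y (sg i)"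
    using intv2[of "sg i" "sg (Suc i)" D Ar] s D Ar unfolding g_def by auto
  moreover have "g/3 * ((sg (Suc i)^2-sg i^2)/2 + sg i^3*(1/sg (Suc i) - 1/sg i)) = g * F"
    unfolding F_def by simp
  ultimately have I: "Y (sg (Suc i)) + D*(1/sg i - 1/sg (Suc i)) + g * F \<le> Y (sg i)" by linarith
  have "real_of_int (h + (max 0 d * eI i) div 1000000 + (gmI A * fI i) div 1000000) / 1000000
     = real_of_int h / 1000000 + real_of_int ((max 0 d * eI i) div 1000000) / 1000000 + real_of_int ((gmI A * fI i) div 1000000) / 1000000"
    by (simp add: add_divide_distrib)
  then show ?thesis using I X Z h by linarith
qed

definition invA :: "int list \<Rightarrow> bool" where
  "invA A \<longleftrightarrow> length A = 21 \<and> (\<forall>j. 1 \<le> j \<longrightarrow> j \<le> 20 \<longrightarrow> real_of_int (A ! j) / 1000000 \<le> Y (sg j))"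

lemma Dfrom_len: "length (Dfrom A i n d) = Suc n"
  by (induction n arbitrary: i d) auto

lemma Dfrom_ok:
  assumes "invA A"
  shows "1 \<le> i \<Longrightarrow> i + n \<le> 20 \<Longrightarrow> real_of_int d / 1000000 \<le> P (sg i) \<Longrightarrow> j \<le> n \<Longrightarrow>
    real_of_int (Dfrom A i n d ! j) / 1000000 \<le> P (sg (i + j))"
proof (induction n arbitrary: i d j)
  case 0
  then show ?case by simp
next
  case (Suc n)
  show ?case
  proof (cases j)
    case 0
    then show ?thesis using Suc.prems by simp
  next
    case (Suc j')
    have A: "real_of_int (A ! Suc i) / 1000000 \<le> Y (sg (Suc i))"
      using assms Suc.prems unfolding invA_def by auto
    have d': "real_of_int (d + (gmI (A ! Suc i) * cI i) div 1000000) / 1000000 \<le> P (sg (Suc i))"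
      by (rule Dstep) (use Suc.prems A in auto)
    have "real_of_int (Dfrom A (Suc i) n (d + (gmI (A ! Suc i) * cI i) div 1000000) ! j') / 1000000 \<le> P (sg (Suc i + j'))"
      by (rule Suc.IH) (use Suc.prems d' \<open>j = Suc j'\<close> in auto)
    then show ?thesis using \<open>j = Suc j'\<close> by simp
  qed
qed

lemma Dl_ok: "invA A \<Longrightarrow> 1 \<le> j \<Longrightarrow> j \<le> 20 \<Longrightarrow> real_of_int (Dl A ! j) / 1000000 \<le> P (sg j)"
proof -
  assume a: "invA A" "1 \<le> j" "j \<le> 20"
  have "real_of_int (Dfrom A 1 19 0 ! (j - 1)) / 1000000 \<le> P (sg (1 + (j - 1)))"
    by (rule Dfrom_ok[OF a(1)]) (use a Pnn[of "sg 1"] in \<open>auto simp: sg_def\<close>)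
  moreover have "Dl A ! j = Dfrom A 1 19 0 ! (j - 1)" unfolding Dl_def using a by (cases j) auto
  ultimately show ?thesis using a by simp
qed

lemma bld_ok:
  assumes A: "invA A" and D: "\<And>j. 1 \<le> j \<Longrightarrow> j \<le> 20 \<Longrightarrow> real_of_int (D ! j) / 1000000 \<le> P (sg j)"
  shows "k < 20 \<Longrightarrow> length acc = 20 - k \<Longrightarrow> (\<And>j. j < 20 - k \<Longrightarrow> real_of_int (acc ! j) / 1000000 \<le> Y (sg (k + 1 + j))) \<Longrightarrow>
    length (bld A D k acc) = 20 \<and> (\<forall>j<20. real_of_int (bld A D k acc ! j) / 1000000 \<le> Y (sg (1 + j)))"
proof (induction k arbitrary: acc)
  case 0
  then show ?case by simp
next
  case (Suc k)
  define new where "new = hd acc + (max 0 (D ! Suc k) * eI (Suc k)) div 1000000 + (gmI (A ! Suc (Suc k)) * fI (Suc k)) div 1000000"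
  have ne: "acc \<noteq> []" using Suc.prems by auto
  have h: "real_of_int (hd acc) / 1000000 \<le> Y (sg (Suc (Suc k)))"
    using Suc.prems(3)[of 0] Suc.prems(1) ne by (simp add: hd_conv_nth)
  have Ab: "real_of_int (A ! Suc (Suc k)) / 1000000 \<le> Y (sg (Suc (Suc k)))"
    using A Suc.prems(1) unfolding invA_def by auto
  have nw: "real_of_int new / 1000000 \<le> Y (sg (Suc k))"
    unfolding new_def by (rule Astep) (use Suc.prems D[of "Suc k"] Ab h in auto)
  have "length (bld A D k (new # acc)) = 20 \<and> (\<forall>j<20. real_of_int (bld A D k (new # acc) ! j) / 1000000 \<le> Y (sg (1 + j)))"
  proof (rule Suc.IH)
    show "k < 20" using Suc.prems by simp
    show "length (new # acc) = 20 - k" using Suc.prems by simp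
    fix j assume j: "j < 20 - k"
    show "real_of_int ((new # acc) ! j) / 1000000 \<le> Y (sg (k + 1 + j))"
    proof (cases j)
      case 0 then show ?thesis using nw by simp
    next
      case (Suc j')
      then show ?thesis using Suc.prems(3)[of j'] j Suc.prems(1) by simp
    qed
  qed
  then show ?case unfolding new_def by simp
qed

lemma step_ok: "invA A \<Longrightarrow> invA (step A)"
proof -
  assume A: "invA A"
  have r: "length (bld A (Dl A) 19 [1000000]) = 20 \<and> (\<forall>j<20. real_of_int (bld A (Dl A) 19 [1000000] ! j) / 1000000 \<le> Y (sg (1 + j)))"
  proof (rule bld_ok[OF A])
    show "\<And>j. 1 \<le> j \<Longrightarrow> j \<le> 20 \<Longrightarrow> real_of_int (Dl A ! j) / 1000000 \<le> P (sg j)" using Dl_ok[OF A] by auto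
    show "19 < (20::nat)" by simp
    show "length [1000000::int] = 20 - 19" by simp
    fix j :: nat assume "j < 20 - 19"
    then show "real_of_int ([1000000] ! j) / 1000000 \<le> Y (sg (19 + 1 + j))" using Y1 by (simp add: sg_def)
  qed
  show "invA (step A)" unfolding invA_def step_def
  proof (intro conjI allI impI)
    show "length (1000000 # bld A (Dl A) 19 [1000000]) = 21" using r by simp
    fix j :: nat assume j: "1 \<le> j" "j \<le> 20"
    then obtain j' where "j = Suc j'" by (cases j) auto
    then show "real_of_int ((1000000 # bld A (Dl A) 19 [1000000]) ! j) / 1000000 \<le> Y (sg j)"
      using r j by auto
  qed
qed

lemma itr_ok: "invA (itr k)"
proof (induction k)
  case 0
  show ?case unfolding invA_def using Yge1 by (auto simp: sg_def)
next
  case (Suc k)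
  then show ?case by (simp add: step_ok)
qed

lemma contra: "1000000 < Dl (itr 20) ! 20 \<Longrightarrow> False"
proof -
  assume c: "1000000 < Dl (itr 20) ! 20"
  have "real_of_int (Dl (itr 20) ! 20) / 1000000 \<le> P (sg 20)" using Dl_ok[OF itr_ok] by simp
  moreover have "sg 20 = 1" by (simp add: sg_def)
  ultimately have "real_of_int (Dl (itr 20) ! 20) / 1000000 \<le> 1" using P1 by simp
  moreover have "1000000 < real_of_int (Dl (itr 20) ! 20)" using c by linarith
  ultimately show False by simp
qed

end



locale gs =
  fixes Q Q1 Q2 :: "real \<Rightarrow> real"
  assumes d1: "\<And>t. t \<ge> 0 \<Longrightarrow> (Q has_real_derivative Q1 t) (at t within {0..})"
    and q10: "Q1 0 = 0"
    and d2: "\<And>t. t > 0 \<Longrightarrow> (Q1 has_real_derivative Q2 t) (at t)"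
    and ode: "\<And>t. t > 0 \<Longrightarrow> - Q2 t - (2 / t) * Q1 t + Q t - (Q t)^3 = 0"
    and pos: "\<And>t. t \<ge> 0 \<Longrightarrow> Q t > 0"
    and lim: "(Q \<longlongrightarrow> 0) at_top"
begin

lemma Q2eq: "t > 0 \<Longrightarrow> Q2 t = Q t - Q t ^ 3 - 2 / t * Q1 t"
  using ode[of t] by simp

lemma dQ: "t > 0 \<Longrightarrow> (Q has_real_derivative Q1 t) (at t)"
proof -
  assume t: "t > 0"
  have "(Q has_real_derivative Q1 t) (at t within {0<..})"
    by (rule has_field_derivative_subset[OF d1]) (use t in auto)
  then show ?thesis using at_within_open[of t "{0<..}"] t by simp
qed

lemma contQ: "continuous_on {0..} Q"
  unfolding continuous_on_eq_continuous_within by (auto intro: DERIV_continuous[OF d1])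

lemma contQ1: "t > 0 \<Longrightarrow> isCont Q1 t"
  using d2 DERIV_isCont by blast

lemma contQ1_on: "0 < a \<Longrightarrow> continuous_on {a..b} Q1"
  using contQ1 by (intro continuous_at_imp_continuous_on) auto

definition E :: "real \<Rightarrow> real" where
  "E t = Q1 t ^ 2 / 2 - Q t ^ 2 / 2 + Q t ^ 4 / 4"

lemma dE: "t > 0 \<Longrightarrow> (E has_real_derivative (- 2 * Q1 t ^ 2 / t)) (at t)"
proof -
  assume t: "t > 0"
  have "(E has_real_derivative (Q1 t * Q2 t - Q t * Q1 t + Q t ^ 3 * Q1 t)) (at t)"
    unfolding E_def[abs_def]
    by (rule derivative_eq_intros dQ[OF t] d2[OF t] refl | simp)+
  moreover have "Q1 t * Q2 t - Q t * Q1 t + Q t ^ 3 * Q1 t = - 2 * Q1 t ^ 2 / t"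
    unfolding Q2eq[OF t] using t by (simp add: field_simps power2_eq_square)
  ultimately show ?thesis by simp
qed

lemma E_dec: "0 < a \<Longrightarrow> a \<le> b \<Longrightarrow> E b \<le> E a"
proof -
  assume ab: "0 < a" "a \<le> b"
  show "E b \<le> E a"
  proof (rule DERIV_nonpos_imp_nonincreasing[OF ab(2)])
    fix x assume x: "a \<le> x" "x \<le> b"
    then have x0: "x > 0" using ab by simp
    have "- 2 * Q1 x ^ 2 / x \<le> 0" using x0 by (simp add: divide_nonpos_pos)
    then show "\<exists>y. (E has_real_derivative y) (at x) \<and> y \<le> 0" using dE[OF x0] by blast
  qed
qed

lemma E_nonneg: "t > 0 \<Longrightarrow> 0 \<le> E t"
proof (rule ccontr)
  assume t: "t > 0" and "\<not> 0 \<le> E t"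
  then have neg: "E t < 0" by simp
  have "((\<lambda>s. Q s ^ 2 / 2 - Q s ^ 4 / 4) \<longlongrightarrow> 0 ^ 2 / 2 - 0 ^ 4 / 4) at_top"
    by (intro tendsto_intros lim) auto
  then have "((\<lambda>s. Q s ^ 2 / 2 - Q s ^ 4 / 4) \<longlongrightarrow> 0) at_top" by simp
  then have "eventually (\<lambda>s. Q s ^ 2 / 2 - Q s ^ 4 / 4 < - E t) at_top"
    using neg by (intro order_tendstoD) auto
  then obtain N where N: "\<And>s. s \<ge> N \<Longrightarrow> Q s ^ 2 / 2 - Q s ^ 4 / 4 < - E t"
    by (auto simp: eventually_at_top_linorder)
  define s where "s = max N t"
  have "E s \<le> E t" using E_dec[of t s] t unfolding s_def by simp
  moreover have "Q s ^ 2 / 2 - Q s ^ 4 / 4 < - E t" using N unfolding s_def by simp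
  moreover have "E s \<ge> - (Q s ^ 2 / 2 - Q s ^ 4 / 4)" unfolding E_def by simp
  ultimately show False by linarith
qed


definition g :: "real \<Rightarrow> real" where "g t = t^2 * Q1 t"

lemma dg: "t > 0 \<Longrightarrow> (g has_real_derivative (t^2 * (Q t - Q t ^ 3))) (at t)"
proof -
  assume t: "t > 0"
  have "(g has_real_derivative (2 * t * Q1 t + t^2 * Q2 t)) (at t)"
    unfolding g_def[abs_def]
    by (rule derivative_eq_intros d2[OF t] refl | simp)+
  moreover have "2 * t * Q1 t + t^2 * Q2 t = t^2 * (Q t - Q t ^ 3)"
    unfolding Q2eq[OF t] using t by (simp add: field_simps power2_eq_square)
  ultimately show ?thesis by simp
qed

lemma Q1_small: "\<exists>M. \<forall>t. 0 < t \<and> t \<le> 1 \<longrightarrow> \<bar>Q1 t\<bar> \<le> M * t"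
proof -
  have c1: "continuous_on {0..1} (\<lambda>t. Q t - Q t ^ 3)"
    by (intro continuous_intros continuous_on_subset[OF contQ]) auto
  have "bounded ((\<lambda>t. Q t - Q t ^ 3) ` {0..1})"
    by (rule compact_imp_bounded[OF compact_continuous_image[OF c1 compact_Icc]])
  then obtain M where M: "M > 0" "\<And>t. t \<in> {0..1} \<Longrightarrow> \<bar>Q t - Q t ^ 3\<bar> \<le> M"
    unfolding bounded_pos by auto
  have c2: "continuous_on {0..1} Q" by (rule continuous_on_subset[OF contQ]) auto
  have "bounded (Q ` {0..1})"
    by (rule compact_imp_bounded[OF compact_continuous_image[OF c2 compact_Icc]])
  then obtain B where B: "B > 0" "\<And>t. t \<in> {0..1} \<Longrightarrow> \<bar>Q t\<bar> \<le> B"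
    unfolding bounded_pos by auto
  have main: "\<bar>g t\<bar> \<le> M * t^3" if t: "0 < t" "t \<le> 1" for t
  proof -
    have claim1: "\<bar>g t - g z\<bar> \<le> M * t^3" if z: "0 < z" "z < t" for z
    proof -
      have "(\<lambda>r. g r - M * t^2 * r) t \<le> (\<lambda>r. g r - M * t^2 * r) z"
      proof (rule DERIV_nonpos_imp_nonincreasing[of z t])
        show "z \<le> t" using z by simp
        fix r assume r: "z \<le> r" "r \<le> t"
        have r0: "r > 0" using r z by simp
        have "((\<lambda>r. g r - M * t^2 * r) has_real_derivative (r^2 * (Q r - Q r ^ 3) - M * t^2)) (at r)"
          by (rule derivative_eq_intros dg[OF r0] refl | simp)+
        moreover have "r^2 * (Q r - Q r ^ 3) - M * t^2 \<le> 0"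
        proof -
          have "r^2 * (Q r - Q r ^ 3) \<le> r^2 * M"
            using M(2)[of r] r0 r t by (intro mult_left_mono) auto
          moreover have "r^2 * M \<le> t^2 * M" using r r0 M(1) by (intro mult_right_mono power_mono) auto
          ultimately show ?thesis by (simp add: algebra_simps)
        qed
        ultimately show "\<exists>y. ((\<lambda>r. g r - M * t^2 * r) has_real_derivative y) (at r) \<and> y \<le> 0" by blast
      qed
      moreover have "(\<lambda>r. g r + M * t^2 * r) z \<le> (\<lambda>r. g r + M * t^2 * r) t"
      proof (rule DERIV_nonneg_imp_nondecreasing[of z t])
        show "z \<le> t" using z by simp
        fix r assume r: "z \<le> r" "r \<le> t"
        have r0: "r > 0" using r z by simp
        have "((\<lambda>r. g r + M * t^2 * r) has_real_derivative (r^2 * (Q r - Q r ^ 3) + M * t^2)) (at r)"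
          by (rule derivative_eq_intros dg[OF r0] refl | simp)+
        moreover have "0 \<le> r^2 * (Q r - Q r ^ 3) + M * t^2"
        proof -
          have "- (r^2 * M) \<le> r^2 * (Q r - Q r ^ 3)"
          proof -
            have "- M \<le> Q r - Q r ^ 3" using M(2)[of r] r0 r t by auto
            then have "r^2 * (- M) \<le> r^2 * (Q r - Q r ^ 3)" by (intro mult_left_mono) auto
            then show ?thesis by simp
          qed
          moreover have "r^2 * M \<le> t^2 * M" using r r0 M(1) by (intro mult_right_mono power_mono) auto
          ultimately show ?thesis by (simp add: algebra_simps)
        qed
        ultimately show "\<exists>y. ((\<lambda>r. g r + M * t^2 * r) has_real_derivative y) (at r) \<and> 0 \<le> y" by blast
      qed
      moreover have "M * t^2 * (t - z) \<le> M * t^3"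
        using z M(1) by (simp add: power3_eq_cube power2_eq_square mult_left_mono)
      ultimately show ?thesis by (simp add: algebra_simps abs_le_iff)
    qed
    have claim2: "\<bar>g t\<bar> \<le> M * t^3 + 2 * B * t'" if t': "0 < t'" "t' < t" for t'
    proof -
      have "continuous_on {0..t'} Q" by (rule continuous_on_subset[OF contQ]) auto
      moreover have "\<And>x. 0 < x \<Longrightarrow> x < t' \<Longrightarrow> Q differentiable (at x)"
        using dQ real_differentiable_def by blast
      ultimately obtain l z where z: "0 < z" "z < t'" "DERIV Q z :> l" "Q t' - Q 0 = (t' - 0) * l"
        using MVT[OF t'(1)] by blast
      have l: "l = Q1 z" using DERIV_unique[OF z(3) dQ[OF z(1)]] .
      have "\<bar>Q t' - Q 0\<bar> \<le> 2 * B" using B(2)[of t'] B(2)[of 0] t' t by auto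
      then have "t' * \<bar>Q1 z\<bar> \<le> 2 * B" using z(4) l t' by (simp add: abs_mult)
      moreover have "\<bar>g z\<bar> = z^2 * \<bar>Q1 z\<bar>" unfolding g_def by (simp add: abs_mult)
      moreover have "z^2 * \<bar>Q1 z\<bar> \<le> t' * (t' * \<bar>Q1 z\<bar>)"
      proof -
        have "z^2 \<le> t'^2" using z by (intro power_mono) auto
        then have "z^2 * \<bar>Q1 z\<bar> \<le> t'^2 * \<bar>Q1 z\<bar>" by (intro mult_right_mono) auto
        then show ?thesis by (simp add: power2_eq_square)
      qed
      moreover have "t' * (t' * \<bar>Q1 z\<bar>) \<le> t' * (2 * B)"
        using calculation(1) t' by (intro mult_left_mono) auto
      ultimately have "\<bar>g z\<bar> \<le> 2 * B * t'" by (simp add: algebra_simps)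
      moreover have "\<bar>g t - g z\<bar> \<le> M * t^3" using claim1 z t' by auto
      ultimately show ?thesis by linarith
    qed
    show ?thesis
    proof (rule ccontr)
      assume "\<not> \<bar>g t\<bar> \<le> M * t^3"
      then have eps: "0 < \<bar>g t\<bar> - M * t^3" by simp
      define t' where "t' = min (t/2) ((\<bar>g t\<bar> - M * t^3) / (4 * B))"
      have t'0: "0 < t'" "t' < t" using t eps B(1) unfolding t'_def by auto
      have "4 * B * t' \<le> 4 * B * ((\<bar>g t\<bar> - M * t^3) / (4 * B))"
        using B(1) unfolding t'_def by (intro mult_left_mono) auto
      also have "\<dots> = \<bar>g t\<bar> - M * t^3" using B(1) by simp
      finally have "4 * B * t' \<le> \<bar>g t\<bar> - M * t^3" .
      then show False using claim2[OF t'0] eps by linarith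
    qed
  qed
  have "\<bar>Q1 t\<bar> \<le> M * t" if t: "0 < t" "t \<le> 1" for t
  proof -
    have "t^2 * \<bar>Q1 t\<bar> \<le> t^2 * (M * t)"
      using main[OF t] unfolding g_def by (simp add: abs_mult power3_eq_cube power2_eq_square algebra_simps)
    then show ?thesis using t by (simp add: mult_le_cancel_left_pos)
  qed
  then show ?thesis by blast
qed

lemma Q_right0: "(Q \<longlongrightarrow> Q 0) (at_right 0)"
proof -
  have "(Q \<longlongrightarrow> Q 0) (at 0 within {0..})"
    using contQ unfolding continuous_on_def by auto
  then show ?thesis by (rule tendsto_within_subset) auto
qed

lemma Q0_ge: "2 \<le> Q 0 ^ 2"
proof -
  obtain M where M: "\<And>t. 0 < t \<Longrightarrow> t \<le> 1 \<Longrightarrow> \<bar>Q1 t\<bar> \<le> M * t" using Q1_small by blast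
  have ev: "eventually (\<lambda>x. norm (Q1 x) \<le> M * x) (at_right 0)"
    unfolding eventually_at_right_field using M by (intro exI[of _ 1]) auto
  have "((\<lambda>x. M * x) \<longlongrightarrow> M * 0) (at_right 0)" by (intro tendsto_intros)
  then have "(Q1 \<longlongrightarrow> 0) (at_right 0)" using Lim_null_comparison[OF ev] by simp
  then have "((\<lambda>t. Q1 t ^ 2 / 2 - Q t ^ 2 / 2 + Q t ^ 4 / 4) \<longlongrightarrow> 0 ^ 2 / 2 - Q 0 ^ 2 / 2 + Q 0 ^ 4 / 4) (at_right 0)"
    by (intro tendsto_intros Q_right0) auto
  then have lE: "(E \<longlongrightarrow> - (Q 0 ^ 2 / 2) + Q 0 ^ 4 / 4) (at_right 0)"
    unfolding E_def[abs_def] by simp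
  have "eventually (\<lambda>t. 0 \<le> E t) (at_right 0)"
    unfolding eventually_at_right_field using E_nonneg by (intro exI[of _ 1]) auto
  then have "0 \<le> - (Q 0 ^ 2 / 2) + Q 0 ^ 4 / 4"
    by (rule tendsto_lowerbound[OF lE _ trivial_limit_at_right_real])
  then have "0 \<le> Q 0 ^ 2 * (Q 0 ^ 2 - 2)" by (simp add: algebra_simps power2_eq_square power4_eq_xxxx)
  moreover have "0 < Q 0 ^ 2" using pos[of 0] by simp
  ultimately show ?thesis by (simp add: zero_le_mult_iff)
qed


lemma Q1_nonpos_near0: "\<exists>b>0. \<forall>t. 0 < t \<and> t < b \<longrightarrow> Q1 t \<le> 0"
proof -
  obtain M where M: "\<And>t. 0 < t \<Longrightarrow> t \<le> 1 \<Longrightarrow> \<bar>Q1 t\<bar> \<le> M * t" using Q1_small by blast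
  have "1 < Q 0"
  proof -
    have "1 < Q 0 ^ 2" using Q0_ge by simp
    then show ?thesis using pos[of 0] by (smt (verit) one_le_power power_le_one)
  qed
  then have "eventually (\<lambda>t. 1 < Q t) (at_right 0)"
    using Q_right0 by (intro order_tendstoD) auto
  then obtain b where b: "b > 0" "\<And>y. 0 < y \<Longrightarrow> y < b \<Longrightarrow> 1 < Q y"
    unfolding eventually_at_right_field by auto
  define b' where "b' = min b 1"
  have "Q1 t \<le> 0" if t: "0 < t" "t < b'" for t
  proof (rule ccontr)
    assume "\<not> Q1 t \<le> 0"
    then have gt: "0 < g t" unfolding g_def using t by simp
    define M' where "M' = \<bar>M\<bar> + 1"
    have M'0: "0 < M'" unfolding M'_def by simp
    define s where "s = min (t/2) (g t / (2 * M'))"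
    have s: "0 < s" "s < t" using t gt M'0 unfolding s_def by auto
    have "g t \<le> g s"
    proof (rule DERIV_nonpos_imp_nonincreasing[of s t])
      show "s \<le> t" using s by simp
      fix r assume r: "s \<le> r" "r \<le> t"
      have r0: "0 < r" "r < b" using r s t unfolding b'_def by auto
      have "Q r - Q r ^ 3 \<le> 0"
      proof -
        have q: "1 < Q r" using b(2)[OF r0] .
        have "Q r * 1 \<le> Q r * Q r ^ 2" using q by (intro mult_left_mono) (auto simp: one_le_power)
        then show ?thesis by (simp add: power3_eq_cube power2_eq_square)
      qed
      then have "r^2 * (Q r - Q r ^ 3) \<le> 0" by (simp add: mult_nonneg_nonpos)
      then show "\<exists>y. (g has_real_derivative y) (at r) \<and> y \<le> 0" using dg[OF r0(1)] by blast
    qed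
    moreover have "g s \<le> M' * s"
    proof -
      have s1: "s \<le> 1" using s t unfolding b'_def by simp
      have "g s \<le> s^2 * \<bar>Q1 s\<bar>" unfolding g_def by (simp add: abs_le_iff mult_left_mono)
      also have "\<dots> \<le> s^2 * (M * s)" using M[OF s(1) s1] by (intro mult_left_mono) auto
      also have "\<dots> \<le> 1 * (M' * s)"
      proof -
        have "s^2 \<le> 1" using s s1 by (simp add: power_le_one)
        moreover have "M * s \<le> M' * s" unfolding M'_def using s by (intro mult_right_mono) auto
        moreover have "0 \<le> M * s" using M[OF s(1) s1] by linarith
        ultimately have "s^2 * (M * s) \<le> 1 * (M * s)" by (intro mult_right_mono) auto
        then show ?thesis using \<open>M * s \<le> M' * s\<close> by simp
      qed
      finally show ?thesis by simp
    qed
    moreover have "M' * s \<le> g t / 2"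
    proof -
      have "M' * s \<le> M' * (g t / (2 * M'))" unfolding s_def using M'0 by (intro mult_left_mono) auto
      also have "\<dots> = g t / 2" using M'0 by simp
      finally show ?thesis .
    qed
    ultimately show False using gt by linarith
  qed
  moreover have "b' > 0" unfolding b'_def using b by simp
  ultimately show ?thesis by blast
qed

lemma Q1_nonpos: "t > 0 \<Longrightarrow> Q1 t \<le> 0"
proof (rule ccontr)
  assume t1: "t > 0" and "\<not> Q1 t \<le> 0"
  then have pos1: "0 < Q1 t" by simp
  obtain b where b: "b > 0" "\<And>s. 0 < s \<Longrightarrow> s < b \<Longrightarrow> Q1 s \<le> 0" using Q1_nonpos_near0 by blast
  define a where "a = min b t / 2"
  have a: "0 < a" "a < t" "Q1 a \<le> 0" using b t1 unfolding a_def by auto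
  define Z where "Z = {s \<in> {a..t}. Q1 s = 0}"
  have cZ: "closed Z" unfolding Z_def
    by (rule continuous_closed_preimage_constant[OF contQ1_on[OF a(1)]]) simp
  have "\<exists>s. a \<le> s \<and> s \<le> t \<and> Q1 s = 0"
    using a pos1 by (intro IVT') (auto intro: contQ1_on)
  then have nZ: "Z \<noteq> {}" unfolding Z_def by auto
  have bZ: "bdd_above Z" unfolding Z_def by (rule bdd_aboveI[of _ t]) auto
  define t0 where "t0 = Sup Z"
  have t0Z: "t0 \<in> Z" unfolding t0_def by (rule closed_contains_Sup[OF nZ bZ cZ])
  then have t0: "a \<le> t0" "t0 \<le> t" "Q1 t0 = 0" unfolding Z_def by auto
  have t0t: "t0 < t" using t0 pos1 by (cases "t0 = t") auto
  have t00: "0 < t0" using t0 a by simp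
  have "0 \<le> E t0" using E_nonneg[OF t00] .
  then have "0 \<le> - (Q t0 ^ 2 / 2) + Q t0 ^ 4 / 4" unfolding E_def using t0 by simp
  then have "0 \<le> Q t0 ^ 2 * (Q t0 ^ 2 - 2)" by (simp add: algebra_simps power2_eq_square power4_eq_xxxx)
  moreover have "0 < Q t0 ^ 2" using pos[of t0] t00 by simp
  ultimately have q2: "2 \<le> Q t0 ^ 2" by (simp add: zero_le_mult_iff)
  have "Q2 t0 < 0"
  proof -
    have "Q2 t0 = Q t0 * (1 - Q t0 ^ 2)" using Q2eq[OF t00] t0 by (simp add: algebra_simps power2_eq_square power3_eq_cube)
    moreover have "0 < Q t0" using pos[of t0] t00 by simp
    moreover have "1 - Q t0 ^ 2 < 0" using q2 by simp
    ultimately show ?thesis by (simp add: mult_pos_neg)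
  qed
  then obtain d where d: "d > 0" "\<And>h. h > 0 \<Longrightarrow> h < d \<Longrightarrow> Q1 t0 > Q1 (t0 + h)"
    using DERIV_neg_dec_right[OF d2[OF t00]] by blast
  define m where "m = min d (t - t0)"
  define h where "h = m / 2"
  have mm: "m \<le> t - t0" "m \<le> d" "0 < m" using d t0t unfolding m_def by auto
  have h1: "0 < h" using mm unfolding h_def by simp
  have h2: "h < d" using mm unfolding h_def by simp
  have h3: "t0 + h < t" using mm unfolding h_def by simp
  note h = h1 h2 h3
  have "Q1 (t0 + h) < 0" using d(2)[OF h(1) h(2)] t0 by simp
  then have "\<exists>s. t0 + h \<le> s \<and> s \<le> t \<and> Q1 s = 0"
    using pos1 h by (intro IVT') (auto intro: contQ1_on simp: t00 add_pos_pos)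
  then obtain s where s: "t0 + h \<le> s" "s \<le> t" "Q1 s = 0" by blast
  then have "s \<in> Z" unfolding Z_def using t0 h by auto
  then have "s \<le> t0" unfolding t0_def using bZ by (rule cSup_upper)
  then show False using s h by linarith
qed

lemma Q_mono: "0 < a \<Longrightarrow> a \<le> b \<Longrightarrow> Q b \<le> Q a"
proof -
  assume ab: "0 < a" "a \<le> b"
  show "Q b \<le> Q a"
  proof (rule DERIV_nonpos_imp_nonincreasing[OF ab(2)])
    fix x assume x: "a \<le> x" "x \<le> b"
    then have x0: "x > 0" using ab by simp
    show "\<exists>y. (Q has_real_derivative y) (at x) \<and> y \<le> 0" using dQ[OF x0] Q1_nonpos[OF x0] by blast
  qed
qed


definition U :: "real \<Rightarrow> real" where "U t = t * Q t"
definition U1 :: "real \<Rightarrow> real" where "U1 t = Q t + t * Q1 t"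

lemma dU: "t > 0 \<Longrightarrow> (U has_real_derivative U1 t) (at t)"
  unfolding U_def[abs_def] U1_def
  by (rule derivative_eq_intros dQ refl | simp)+

lemma dU1: "t > 0 \<Longrightarrow> (U1 has_real_derivative t * (Q t - Q t ^ 3)) (at t)"
proof -
  assume t: "t > 0"
  have "(U1 has_real_derivative Q1 t + (Q1 t + t * Q2 t)) (at t)"
    unfolding U1_def[abs_def]
    by (rule derivative_eq_intros dQ[OF t] d2[OF t] refl | simp)+
  moreover have "Q1 t + (Q1 t + t * Q2 t) = t * (Q t - Q t ^ 3)"
    unfolding Q2eq[OF t] using t by (simp add: field_simps)
  ultimately show ?thesis by simp
qed

lemma Upos: "t > 0 \<Longrightarrow> U t > 0"
  unfolding U_def using pos[of t] by simp

lemma contU: "continuous_on {0..} U"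
  unfolding U_def[abs_def] by (intro continuous_intros contQ)

lemma contU1: "t > 0 \<Longrightarrow> isCont U1 t"
  using dU1 DERIV_isCont by blast

definition H :: "real \<Rightarrow> real" where "H t = U1 t ^ 2 / 2 - U t ^ 2 / 2 + t^2 * Q t ^ 4 / 4"

lemma dH: "t > 0 \<Longrightarrow> (H has_real_derivative (- t * Q t ^ 4 / 2)) (at t)"
proof -
  assume t: "t > 0"
  have D: "(H has_real_derivative (U1 t * (t * (Q t - Q t ^ 3)) - U t * U1 t + (2 * t * Q t ^ 4 / 4 + t^2 * (4 * Q t ^ 3 * Q1 t) / 4))) (at t)"
    unfolding H_def[abs_def]
    by (rule derivative_eq_intros dU[OF t] dU1[OF t] dQ[OF t] refl | simp)+
  have E: "U1 t * (t * (Q t - Q t ^ 3)) - U t * U1 t + (2 * t * Q t ^ 4 / 4 + t^2 * (4 * Q t ^ 3 * Q1 t) / 4) = - t * Q t ^ 4 / 2"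
    unfolding U_def U1_def by (simp add: field_simps power2_eq_square power3_eq_cube power4_eq_xxxx)
  show ?thesis using D unfolding E .
qed

lemma H_dec: "0 < a \<Longrightarrow> a \<le> b \<Longrightarrow> H b \<le> H a"
proof -
  assume ab: "0 < a" "a \<le> b"
  show "H b \<le> H a"
  proof (rule DERIV_nonpos_imp_nonincreasing[OF ab(2)])
    fix x assume x: "a \<le> x" "x \<le> b"
    then have x0: "x > 0" using ab by simp
    have "- x * Q x ^ 4 / 2 \<le> 0" using x0 by (simp add: divide_nonpos_pos)
    then show "\<exists>y. (H has_real_derivative y) (at x) \<and> y \<le> 0" using dH[OF x0] by blast
  qed
qed

lemma noinf:
  assumes t0: "0 < t0" and m: "0 < m" and lb: "\<And>t. t \<ge> t0 \<Longrightarrow> m \<le> U t"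
  shows False
proof -
  have "eventually (\<lambda>t. Q t < 1/2) at_top" using lim by (intro order_tendstoD) auto
  then obtain N where N: "\<And>t. t \<ge> N \<Longrightarrow> Q t < 1/2" by (auto simp: eventually_at_top_linorder)
  define t2 where "t2 = max N t0"
  have t2: "0 < t2" "t0 \<le> t2" "N \<le> t2" using t0 unfolding t2_def by auto
  have d1': "3/4 * m \<le> r * (Q r - Q r ^ 3)" if r: "t2 \<le> r" for r
  proof -
    have r0: "0 < r" using r t2 by simp
    have q: "0 < Q r" "Q r < 1/2" using pos[of r] N[of r] r0 r t2 by auto
    have "Q r ^ 2 \<le> 1/4"
    proof -
      have "Q r ^ 2 \<le> (1/2)^2" using q by (intro power_mono) auto
      then show ?thesis by (simp add: power2_eq_square)
    qed
    then have a1: "3/4 \<le> 1 - Q r ^ 2" by simp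
    have a2: "m \<le> U r" using lb[of r] r t2 by simp
    have "r * (Q r - Q r ^ 3) = U r * (1 - Q r ^ 2)" unfolding U_def by (simp add: algebra_simps power2_eq_square power3_eq_cube)
    have "3/4 * m \<le> U r * (1 - Q r ^ 2)"
    proof -
      have "3/4 * m \<le> (1 - Q r ^ 2) * m" using a1 m by (intro mult_right_mono) auto
      also have "\<dots> \<le> (1 - Q r ^ 2) * U r" using a1 a2 by (intro mult_left_mono) auto
      finally show ?thesis by (simp add: mult.commute)
    qed
    then show ?thesis using \<open>r * (Q r - Q r ^ 3) = U r * (1 - Q r ^ 2)\<close> by simp
  qed
  have A: "U1 t2 + 3/4 * m * (t - t2) \<le> U1 t" if t: "t2 \<le> t" for t
  proof -
    have "(\<lambda>r. U1 r - 3/4 * m * r) t2 \<le> (\<lambda>r. U1 r - 3/4 * m * r) t"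
    proof (rule DERIV_nonneg_imp_nondecreasing[OF t])
      fix r assume r: "t2 \<le> r" "r \<le> t"
      have r0: "0 < r" using r t2 by simp
      have "((\<lambda>r. U1 r - 3/4 * m * r) has_real_derivative (r * (Q r - Q r ^ 3) - 3/4 * m)) (at r)"
        by (rule derivative_eq_intros dU1[OF r0] refl | simp)+
      moreover have "0 \<le> r * (Q r - Q r ^ 3) - 3/4 * m" using d1'[OF r(1)] by simp
      ultimately show "\<exists>y. ((\<lambda>r. U1 r - 3/4 * m * r) has_real_derivative y) (at r) \<and> 0 \<le> y" by blast
    qed
    then show ?thesis by (simp add: field_simps)
  qed
  define t3 where "t3 = t2 + (\<bar>U1 t2\<bar> + 1) / (3/4 * m)"
  have pq: "0 \<le> (\<bar>U1 t2\<bar> + 1) / (3/4 * m)" using m by simp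
  have t3: "t2 \<le> t3" "0 < t3" using pq t2 unfolding t3_def by linarith+
  have U1ge: "1 \<le> U1 t" if t: "t3 \<le> t" for t
  proof -
    have "3/4 * m * (t3 - t2) \<le> 3/4 * m * (t - t2)" using t m by (intro mult_left_mono) auto
    moreover have "3/4 * m * (t3 - t2) = \<bar>U1 t2\<bar> + 1" unfolding t3_def using m by simp
    moreover have "U1 t2 + 3/4 * m * (t - t2) \<le> U1 t" using A[of t] t t3 by simp
    ultimately show ?thesis by linarith
  qed
  have B: "U t3 + (t - t3) \<le> U t" if t: "t3 \<le> t" for t
  proof -
    have "(\<lambda>r. U r - r) t3 \<le> (\<lambda>r. U r - r) t"
    proof (rule DERIV_nonneg_imp_nondecreasing[OF t])
      fix r assume r: "t3 \<le> r" "r \<le> t"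
      have r0: "0 < r" using r t3 by simp
      have "((\<lambda>r. U r - r) has_real_derivative (U1 r - 1)) (at r)"
        by (rule derivative_eq_intros dU[OF r0] refl | simp)+
      moreover have "0 \<le> U1 r - 1" using U1ge[OF r(1)] by simp
      ultimately show "\<exists>y. ((\<lambda>r. U r - r) has_real_derivative y) (at r) \<and> 0 \<le> y" by blast
    qed
    then show ?thesis by simp
  qed
  have "U t3 + (2 * t3 - t3) \<le> U (2 * t3)" using B[of "2 * t3"] t3 by simp
  moreover have "0 < U t3" using Upos t3 by simp
  ultimately have "t3 < U (2 * t3)" by simp
  then have "t3 < 2 * t3 * Q (2 * t3)" unfolding U_def .
  then have "1/2 < Q (2 * t3)" using t3 by (simp add: field_simps)
  moreover have "Q (2 * t3) < 1/2" using N[of "2 * t3"] t3 t2 by simp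
  ultimately show False by simp
qed

lemma H_nonneg: "t > 0 \<Longrightarrow> 0 \<le> H t"
proof (rule ccontr)
  assume t: "t > 0" and "\<not> 0 \<le> H t"
  then have neg: "H t < 0" by simp
  define m where "m = sqrt (- 2 * H t)"
  have m0: "0 < m" unfolding m_def using neg by simp
  have "m \<le> U s" if s: "s \<ge> t" for s
  proof -
    have s0: "0 < s" using s t by simp
    have "H s \<le> H t" using H_dec[OF t s] .
    moreover have "- (U s ^ 2 / 2) \<le> H s" unfolding H_def by simp
    ultimately have "- 2 * H t \<le> U s ^ 2" by simp
    then have "m \<le> sqrt (U s ^ 2)" unfolding m_def by (rule real_sqrt_le_mono)
    then show ?thesis using Upos[OF s0] by simp
  qed
  then show False using noinf[OF t m0] by blast
qed


lemma key:
  assumes c2: "1999/1000 \<le> c2" "c2 < 2" and t1: "0 < t1" and big: "c2 \<le> U t1 ^ 2"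
  and num: "1000000 < Dl (itr 20) ! 20"
  shows False
proof -
  define c where "c = sqrt c2"
  have c0: "0 < c" unfolding c_def using c2 by simp
  have cc: "c ^ 2 = c2" unfolding c_def using c2 by simp
  have Ut1: "c \<le> U t1"
  proof -
    have "c \<le> sqrt (U t1 ^ 2)" unfolding c_def using big by (rule real_sqrt_le_mono)
    then show ?thesis using Upos[OF t1] by simp
  qed
  have U0: "U 0 = 0" unfolding U_def by simp
  have cU: "continuous_on {0..t1} U" by (rule continuous_on_subset[OF contU]) auto
  define Z where "Z = {t \<in> {0..t1}. U t = c}"
  have cZ: "closed Z" unfolding Z_def by (rule continuous_closed_preimage_constant[OF cU]) simp
  have "\<exists>s. 0 \<le> s \<and> s \<le> t1 \<and> U s = c" using U0 c0 Ut1 t1 cU by (intro IVT') auto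
  then have nZ: "Z \<noteq> {}" unfolding Z_def by auto
  have bZ: "bdd_below Z" unfolding Z_def by (rule bdd_belowI[of _ 0]) auto
  define T where "T = Inf Z"
  have TZ: "T \<in> Z" unfolding T_def by (rule closed_contains_Inf[OF nZ bZ cZ])
  then have T: "0 \<le> T" "T \<le> t1" "U T = c" unfolding Z_def by auto
  have T0: "0 < T" using T U0 c0 by (cases "T = 0") auto
  have below: "U s < c" if s: "0 \<le> s" "s < T" for s
  proof (rule ccontr)
    assume "\<not> U s < c"
    then have "c \<le> U s" by simp
    moreover have "continuous_on {0..s} U" by (rule continuous_on_subset[OF contU]) auto
    ultimately have "\<exists>z. 0 \<le> z \<and> z \<le> s \<and> U z = c" using U0 c0 s by (intro IVT') auto
    then obtain z where z: "0 \<le> z" "z \<le> s" "U z = c" by blast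
    then have "z \<in> Z" unfolding Z_def using s T by auto
    then have "T \<le> z" unfolding T_def using bZ by (rule cInf_lower)
    then show False using z s by linarith
  qed
  have U1T: "0 \<le> U1 T"
  proof (rule ccontr)
    assume "\<not> 0 \<le> U1 T"
    then have "U1 T < 0" by simp
    then obtain d where d: "d > 0" "\<And>h. h > 0 \<Longrightarrow> h < d \<Longrightarrow> U T < U (T - h)"
      using DERIV_neg_dec_left[OF dU[OF T0]] by blast
    define m where "m = min d T"
    define h where "h = m / 2"
    have mm: "m \<le> T" "m \<le> d" "0 < m" using d T0 unfolding m_def by auto
    have h: "0 < h" "h < d" "h < T" using mm unfolding h_def by simp_all
    have "U T < U (T - h)" using d(2)[OF h(1) h(2)] .
    moreover have "U (T - h) < c" using below[of "T - h"] h by simp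
    ultimately show False using T by simp
  qed
  obtain ts where ts: "T \<le> ts" "U1 ts = 0"
  proof (cases "\<exists>s\<ge>T. U1 s \<le> 0")
    case True
    then obtain s where s: "T \<le> s" "U1 s \<le> 0" by blast
    have "continuous_on {T..s} U1" using T0 contU1 by (intro continuous_at_imp_continuous_on) auto
    then have "\<exists>z. T \<le> z \<and> z \<le> s \<and> U1 z = 0" using U1T s by (intro IVT2') auto
    then show ?thesis using that by auto
  next
    case False
    then have pos1: "\<And>s. T \<le> s \<Longrightarrow> 0 < U1 s" by auto
    have "c \<le> U s" if s: "T \<le> s" for s
    proof -
      have "U T \<le> U s"
      proof (rule DERIV_nonneg_imp_nondecreasing[OF s])
        fix r assume r: "T \<le> r" "r \<le> s"
        then have r0: "0 < r" using T0 by simp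
        show "\<exists>y. (U has_real_derivative y) (at r) \<and> 0 \<le> y" using dU[OF r0] pos1[OF r(1)] by auto
      qed
      then show ?thesis using T by simp
    qed
    then show ?thesis using noinf[OF T0 c0] by blast
  qed
  have ts0: "0 < ts" using ts T0 by simp
  have "0 \<le> H ts" using H_nonneg[OF ts0] .
  then have "0 \<le> - (ts^2 * Q ts ^ 2 / 2) + ts^2 * Q ts ^ 4 / 4" unfolding H_def U_def using ts by (simp add: power_mult_distrib)
  then have "0 \<le> ts^2 * (Q ts ^ 2 * (Q ts ^ 2 - 2))" by (simp add: algebra_simps power2_eq_square power4_eq_xxxx)
  then have "0 \<le> Q ts ^ 2 * (Q ts ^ 2 - 2)" using ts0 by (simp add: zero_le_mult_iff)
  moreover have "0 < Q ts ^ 2" using pos[of ts] ts0 by simp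
  ultimately have qts: "2 \<le> Q ts ^ 2" by (simp add: zero_le_mult_iff)
  have "Q ts \<le> Q T" using Q_mono[OF T0 ts(1)] .
  then have "Q ts ^ 2 \<le> Q T ^ 2" using pos[of ts] ts0 by (intro power_mono) auto
  then have qT: "2 \<le> Q T ^ 2" using qts by simp
  define q where "q = Q T"
  have q0: "0 < q" unfolding q_def using pos[of T] T0 by simp
  have Tqc: "T * q = c" using T(3) unfolding U_def q_def .
  have Tq: "T^2 * q^2 = c2"
  proof -
    have "T^2 * q^2 = (T * q)^2" by (simp add: power_mult_distrib)
    then show ?thesis using Tqc cc by simp
  qed
  have T1: "T^2 \<le> 1"
  proof (rule ccontr)
    assume "\<not> T^2 \<le> 1"
    then have "1 * q^2 \<le> T^2 * q^2" by (intro mult_right_mono) auto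
    then show False using Tq qT c2 unfolding q_def by simp
  qed
  define Y where "Y s = Q (T * s) / q" for s
  define P where "P s = - ((T * s)^2 * Q1 (T * s)) / (T * q)" for s
  have chain: "((\<lambda>s. f (T * s)) has_real_derivative D * T) (at s)"
    if "(f has_real_derivative D) (at (T * s))" for f D s
  proof -
    have "((\<lambda>s. T * s) has_real_derivative T) (at s)" by (rule derivative_eq_intros refl | simp)+
    from DERIV_chain2[OF that this] show ?thesis .
  qed
  have dG: "((\<lambda>r. r^2 * Q1 r) has_real_derivative (2 * r * Q1 r + r^2 * Q2 r)) (at r)" if "0 < r" for r
    by (rule derivative_eq_intros d2[OF that] refl | simp)+
  interpret sc: scaled Y P c2 "T^2"
  proof
    fix s :: real assume s: "0 < s" "s \<le> 1"
    have Ts: "0 < T * s" using T0 s by simp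
    have "((\<lambda>s. Q (T * s) / q) has_real_derivative Q1 (T * s) * T / q) (at s)"
      using DERIV_cdivide[OF chain[OF dQ[OF Ts]], of q] by simp
    moreover have "Q1 (T * s) * T / q = - P s / s^2"
      unfolding P_def using s T0 q0 by (simp add: field_simps power2_eq_square)
    ultimately show "(Y has_real_derivative (- P s / s^2)) (at s)" unfolding Y_def[abs_def] by simp
  next
    fix s :: real assume s: "0 < s" "s \<le> 1"
    have Ts: "0 < T * s" using T0 s by simp
    have D: "((\<lambda>s. - ((T * s)^2 * Q1 (T * s)) / (T * q)) has_real_derivative
        - ((2 * (T * s) * Q1 (T * s) + (T * s)^2 * Q2 (T * s)) * T) / (T * q)) (at s)"
      using DERIV_cdivide[OF DERIV_minus[OF chain[OF dG[OF Ts]]], of "T * q"] by simp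
    have E: "- ((2 * (T * s) * Q1 (T * s) + (T * s)^2 * Q2 (T * s)) * T) / (T * q)
        = s^2 * (c2 * Y s ^ 3 - T^2 * Y s)"
      unfolding Y_def Q2eq[OF Ts] Tq[symmetric] using s T0 q0
      by (simp add: field_simps power2_eq_square power3_eq_cube)
    show "(P has_real_derivative (s^2 * (c2 * Y s ^ 3 - T^2 * Y s))) (at s)"
      using D unfolding E P_def[abs_def] .
  next
    fix a b :: real assume ab: "0 < a" "a \<le> b" "b \<le> 1"
    have "Q (T * b) \<le> Q (T * a)" using Q_mono[of "T * a" "T * b"] ab T0 by (simp add: mult_left_mono)
    then show "Y b \<le> Y a" unfolding Y_def using q0 by (simp add: divide_right_mono)
  next
    show "Y 1 = 1" unfolding Y_def q_def using q0 q_def by simp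
  next
    fix s :: real assume s: "0 < s" "s \<le> 1"
    have Ts: "0 < T * s" using T0 s by simp
    have "Q1 (T * s) \<le> 0" using Q1_nonpos[OF Ts] .
    then have "(T * s)^2 * Q1 (T * s) \<le> 0" by (simp add: mult_nonneg_nonpos)
    moreover have "0 < T * q" using T0 q0 by simp
    ultimately have "(T * s)^2 * Q1 (T * s) / (T * q) \<le> 0" by (rule divide_nonpos_pos)
    then show "0 \<le> P s" unfolding P_def by simp
  next
    have "P 1 = - (T * Q1 T) / q" unfolding P_def using T0 q0 by (simp add: power2_eq_square)
    also have "\<dots> \<le> 1"
    proof -
      have "- (T * Q1 T) \<le> q" using U1T unfolding U1_def q_def by simp
      then have "- (T * Q1 T) / q \<le> q / q" using q0 by (intro divide_right_mono) auto
      then show ?thesis using q0 by simp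
    qed
    finally show "P 1 \<le> 1" .
  next
    show "1999/1000 \<le> c2" using c2 by simp
  next
    show "0 \<le> T^2" by simp
  next
    show "T^2 \<le> 1" using T1 .
  qed
  show False by (rule sc.contra[OF num])
qed

end


lemma num_check: "1000000 < Dl (itr 20) ! 20"
  by code_simp

theorem lemma5p1:
  fixes Q :: "real \<Rightarrow> real"
  assumes "ground_state_profile Q"
  shows "\<forall>t>0. (6 - 10 powr (-20)) / t^2 > 3 * (Q t)^2"
proof -
  from assms obtain Q1 Q2 where
    d1: "\<forall>t\<ge>0. (Q has_real_derivative Q1 t) (at t within {0..})" and q10: "Q1 0 = 0"
    and d2: "\<forall>t>0. (Q1 has_real_derivative Q2 t) (at t)"
    and ode: "\<forall>t>0. - Q2 t - (2 / t) * Q1 t + Q t - (Q t)^3 = 0"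
    and pos: "\<forall>t\<ge>0. Q t > 0" and lim: "(Q \<longlongrightarrow> 0) at_top"
    unfolding ground_state_profile_def by blast
  interpret G: gs Q Q1 Q2
    by unfold_locales (use d1 q10 d2 ode pos lim in auto)
  have e1: "10 powr (-20::real) = 1 / 10^20" by (simp add: powr_minus_divide)
  define c2 where "c2 = 2 - 10 powr (-20::real) / 3"
  have c2b: "1999/1000 \<le> c2" "c2 < 2" unfolding c2_def e1 by simp_all
  show ?thesis
  proof (intro allI impI)
    fix t :: real assume t: "t > 0"
    show "(6 - 10 powr (-20)) / t^2 > 3 * (Q t)^2"
    proof (rule ccontr)
      assume "\<not> (6 - 10 powr (-20)) / t^2 > 3 * (Q t)^2"
      then have "(6 - 10 powr (-20)) / t^2 \<le> 3 * (Q t)^2" by simp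
      then have "6 - 10 powr (-20) \<le> 3 * (Q t)^2 * t^2" using t by (simp add: divide_le_eq)
      then have "c2 \<le> (t * Q t)^2" unfolding c2_def by (simp add: power_mult_distrib algebra_simps)
      then have "c2 \<le> G.U t ^ 2" unfolding G.U_def .
      then show False using G.key[OF c2b t _ num_check] by simp
    qed
  qed
qed

end
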